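(* Let $d,L$ be positive integers. For all nonnegative integers $n,m$ there is a bijection between (1) fillings of the rectangular Young diagram with $n$ rows and $m$ columns that avoid the pattern $d\cdots1(d+1)$ and contain no NE-chain of length greater than $L$, and (2) pairs $(P,Q)$ with $P=(\lambda^{(0)},\ldots,\lambda^{(n)})$ and $Q=(\mu^{(0)},\ldots,\mu^{(m)})$ $(d,L)$-cylindric semistandard Young tableaux with common shape $\lambda^{(n)}=\mu^{(m)}$, such that if a filling corresponds to $(P,Q)$ then the sum of the entries in the $i$-th row equals $\mathrm{wt}(P)_i$ for each $i$, the sum of entries in the $j$-th column equals $\mathrm{wt}(Q)_j$ for each $j$, and the reflection of the filling across the line $y=x$ (a filling of the rectangle with $m$ rows and $n$ columns) corresponds to $(Q,P)$.
   Context: Partitions: finite weakly decreasing sequences of positive integers, $\lambda_i=0$ for $i>\ell(\lambda)$, $|\lambda|=\sum\lambda_i$; a $d$-partition has $\ell\le d$. For $d$-partitions, $\alpha\prec_{(d,L)}\beta$ means $\beta_1\ge\alpha_1\ge\beta_2\ge\alpha_2\ge\cdots\ge\beta_d\ge\alpha_d\ge\beta_1-L$. A $(d,L)$-cylindric semistandard Young tableau is a sequence of $d$-partitions $\emptyset=\lambda^{(0)}\prec_{(d,L)}\lambda^{(1)}\prec_{(d,L)}\cdots\prec_{(d,L)}\lambda^{(k)}$; its shape is $\lambda^{(k)}$ and its weight is the vector with $\mathrm{wt}(T)_i=|\lambda^{(i)}|-|\lambda^{(i-1)}|$, $1\le i\le k$. Young diagrams lie in the first quadrant with unit cells, rows numbered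 upward from the $x$-axis and columns rightward from the $y$-axis; a filling assigns nonnegative integers to cells. A NE-chain is a sequence of cells with nonzero entries, each weakly above and weakly right of the previous; its length is the sum of entries. A filling contains $d\cdots1(d+1)$ if there are cells $c_1,\dots,c_{d+1}$ with nonzero entries, each $c_{i+1}$ ($i<d$) strictly below and strictly right of $c_i$, and $c_{d+1}$ strictly above and strictly right of all of $c_1,\dots,c_d$; otherwise it avoids it. *)

theory Defs
  imports Main
begin

type_synonym filling = "nat \<Rightarrow> nat \<Rightarrow> nat"
  \<comment> \<open>f i j = entry of the cell in row i (counted upward from 1) and column j (counted rightward from 1)\<close>

type_synonym cell = "nat \<times> nat"  \<comment> \<open>(row, column)\<close>

definition is_filling :: "nat \<Rightarrow> nat \<Rightarrow> filling \<Rightarrow> bool" where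
  "is_filling n m f \<longleftrightarrow> (\<forall>i j. f i j \<noteq> 0 \<longrightarrow> 1 \<le> i \<and> i \<le> n \<and> 1 \<le> j \<and> j \<le> m)"

definition entry :: "filling \<Rightarrow> cell \<Rightarrow> nat" where
  "entry f c = f (fst c) (snd c)"

definition reflect :: "filling \<Rightarrow> filling" where
  "reflect f = (\<lambda>i j. f j i)"

definition ne_chain :: "filling \<Rightarrow> cell list \<Rightarrow> bool" where
  "ne_chain f cs \<longleftrightarrow> distinct cs \<and> (\<forall>c \<in> set cs. entry f c \<noteq> 0) \<and>
     (\<forall>k. Suc k < length cs \<longrightarrow> fst (cs ! k) \<le> fst (cs ! Suc k) \<and> snd (cs ! k) \<le> snd (cs ! Suc k))"

definition chain_length :: "filling \<Rightarrow> cell list \<Rightarrow> nat" where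
  "chain_length f cs = sum_list (map (entry f) cs)"

definition contains_pattern :: "nat \<Rightarrow> filling \<Rightarrow> bool" where
  "contains_pattern d f \<longleftrightarrow> (\<exists>c :: nat \<Rightarrow> cell.
     (\<forall>i \<in> {1..d+1}. entry f (c i) \<noteq> 0) \<and>
     (\<forall>i \<in> {1..<d}. fst (c (i+1)) < fst (c i) \<and> snd (c i) < snd (c (i+1))) \<and>
     (\<forall>i \<in> {1..d}. fst (c i) < fst (c (d+1)) \<and> snd (c i) < snd (c (d+1))))"

definition admissible_fillings :: "nat \<Rightarrow> nat \<Rightarrow> nat \<Rightarrow> nat \<Rightarrow> filling set" where
  "admissible_fillings d L n m = {f. is_filling n m f \<and> \<not> contains_pattern d f \<and>
      (\<forall>cs. ne_chain f cs \<longrightarrow> chain_length f cs \<le> L)}"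

text \<open>A d-partition is represented as the list [lambda_1, ..., lambda_d] (padded with zeros).\<close>
definition is_dpart :: "nat \<Rightarrow> nat list \<Rightarrow> bool" where
  "is_dpart d lam \<longleftrightarrow> length lam = d \<and> sorted_wrt (\<ge>) lam"

definition cyl_prec :: "nat \<Rightarrow> nat \<Rightarrow> nat list \<Rightarrow> nat list \<Rightarrow> bool" where
  "cyl_prec d L \<alpha> \<beta> \<longleftrightarrow> is_dpart d \<alpha> \<and> is_dpart d \<beta> \<and>
     (\<forall>i < d. \<alpha> ! i \<le> \<beta> ! i) \<and>
     (\<forall>i. Suc i < d \<longrightarrow> \<beta> ! Suc i \<le> \<alpha> ! i) \<and>
     int (\<beta> ! 0) - int L \<le> int (\<alpha> ! (d - 1))"

text \<open>A cylindric SSYT (lambda0, ..., lambdak) is the list of its partitions, of length k+1.\<close>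
definition cyl_ssyt :: "nat \<Rightarrow> nat \<Rightarrow> nat list list \<Rightarrow> bool" where
  "cyl_ssyt d L T \<longleftrightarrow> T \<noteq> [] \<and> T ! 0 = replicate d 0 \<and>
     (\<forall>i. Suc i < length T \<longrightarrow> cyl_prec d L (T ! i) (T ! Suc i))"

definition shape :: "nat list list \<Rightarrow> nat list" where
  "shape T = last T"

definition wt :: "nat list list \<Rightarrow> nat \<Rightarrow> int" where
  "wt T i = int (sum_list (T ! i)) - int (sum_list (T ! (i - 1)))"

definition tableau_pairs :: "nat \<Rightarrow> nat \<Rightarrow> nat \<Rightarrow> nat \<Rightarrow> (nat list list \<times> nat list list) set" where
  "tableau_pairs d L n m = {(P, Q). cyl_ssyt d L P \<and> length P = n + 1 \<and>
      cyl_ssyt d L Q \<and> length Q = m + 1 \<and> shape P = shape Q}"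

end

theory Submission
  imports Defs
begin


fun chainf :: "filling \<Rightarrow> nat \<Rightarrow> nat \<Rightarrow> nat" where
  "chainf g 0 j = 0"
| "chainf g (Suc i) 0 = 0"
| "chainf g (Suc i) (Suc j) = max (chainf g i (Suc j)) (chainf g (Suc i) j) + g (Suc i) (Suc j)"

lemma chainf_0j[simp]: "chainf g i 0 = 0" by (cases i) auto

lemma chainf_rec: "0 < i \<Longrightarrow> 0 < j \<Longrightarrow>
  chainf g i j = max (chainf g (i-1) j) (chainf g i (j-1)) + g i j"
  by (cases i; cases j) auto

lemma chainf_mono_i: "chainf g i j \<le> chainf g (Suc i) j"
  by (cases j) auto

lemma chainf_mono_j: "chainf g i j \<le> chainf g i (Suc j)"
  by (cases i) auto

lemma chainf_mono: "i \<le> i' \<Longrightarrow> j \<le> j' \<Longrightarrow> chainf g i j \<le> chainf g i' j'"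
proof -
  assume a: "i \<le> i'" "j \<le> j'"
  have "chainf g i j \<le> chainf g i' j"
    using a(1) by (induction rule: dec_induct) (auto intro: order_trans[OF _ chainf_mono_i])
  also have "\<dots> \<le> chainf g i' j'"
    using a(2) by (induction rule: dec_induct) (auto intro: order_trans[OF _ chainf_mono_j])
  finally show ?thesis .
qed

lemma chainf_pos: "0 < chainf g p q \<longleftrightarrow> (\<exists>a b. 1 \<le> a \<and> a \<le> p \<and> 1 \<le> b \<and> b \<le> q \<and> g a b \<noteq> 0)"
proof (induction g p q rule: chainf.induct)
  case (3 g i j)
  show ?case
    apply (simp only: chainf.simps)
    using 3 by (auto simp: le_Suc_eq)
qed auto

definition dv :: "filling \<Rightarrow> filling" where
  "dv g = (\<lambda>i j. if i = 0 \<or> j = 0 then 0 else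
     min (chainf g (i-1) j) (chainf g i (j-1)) - chainf g (i-1) (j-1))"

definition sechain :: "filling \<Rightarrow> nat \<Rightarrow> nat \<Rightarrow> nat \<Rightarrow> bool" where
  "sechain g s p q \<longleftrightarrow> (\<exists>c :: nat \<Rightarrow> nat \<times> nat.
     (\<forall>t\<in>{1..s}. g (fst (c t)) (snd (c t)) \<noteq> 0 \<and> 1 \<le> fst (c t) \<and> fst (c t) \<le> p
        \<and> 1 \<le> snd (c t) \<and> snd (c t) \<le> q) \<and>
     (\<forall>t\<in>{1..<s}. fst (c (Suc t)) < fst (c t) \<and> snd (c t) < snd (c (Suc t))))"

abbreviation (input) C where "C g \<equiv> chainf g"

lemma chainf_colzero:
  assumes "e \<le> p" "0 < q" "\<forall>a. e < a \<and> a \<le> p \<longrightarrow> g a q = 0"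
  shows "chainf g p q = max (chainf g p (q-1)) (chainf g e q)"
  using assms
proof (induction p rule: dec_induct)
  case base
  then show ?case using chainf_mono[of e e "q-1" q g] by auto
next
  case (step p)
  have "chainf g (Suc p) q = max (chainf g p q) (chainf g (Suc p) (q-1)) + g (Suc p) q"
    using chainf_rec[of "Suc p" q g] step by simp
  also have "g (Suc p) q = 0" using step by auto
  finally show ?case using step chainf_mono_i[of g p "q-1"] by (auto simp: max_def)
qed

lemma chainf_rowzero:
  assumes "e \<le> q" "0 < p" "\<forall>b. e < b \<and> b \<le> q \<longrightarrow> g p b = 0"
  shows "chainf g p q = max (chainf g (p-1) q) (chainf g p e)"
  using assms
proof (induction q rule: dec_induct)
  case base
  then show ?case using chainf_mono[of "p-1" p e e g] by auto
next
  case (step q)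
  have "chainf g p (Suc q) = max (chainf g (p-1) (Suc q)) (chainf g p q) + g p (Suc q)"
    using chainf_rec[of p "Suc q" g] step by simp
  also have "g p (Suc q) = 0" using step by auto
  finally show ?case using step chainf_mono_j[of g "p-1" q] by (auto simp: max_def)
qed

lemma dv_pos: "dv g i j \<noteq> 0 \<Longrightarrow> 0 < i \<and> 0 < j \<and>
   chainf g (i-1) (j-1) < chainf g (i-1) j \<and> chainf g (i-1) (j-1) < chainf g i (j-1)"
  unfolding dv_def by (auto split: if_splits)

lemma hook:
  assumes g1: "g r c \<noteq> 0" and g2: "g r' c' \<noteq> 0" and "1 \<le> r'" "r' < r" "1 \<le> c" "c < c'"
  shows "\<exists>a b. r' < a \<and> a \<le> r \<and> c < b \<and> b \<le> c' \<and> dv g a b \<noteq> 0"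
proof (rule ccontr)
  assume nz: "\<not> ?thesis"
  have row: "chainf g (r-1) j < chainf g r j" if "c \<le> j" "j \<le> c'" for j
    using that
  proof (induction j rule: dec_induct)
    case base
    have "chainf g r c = max (chainf g (r-1) c) (chainf g r (c-1)) + g r c"
      using chainf_rec[of r c g] assms by simp
    then show ?case using g1 by simp
  next
    case (step j)
    have "dv g r (Suc j) = 0" using nz step assms by auto
    then have "min (chainf g (r-1) (Suc j)) (chainf g r j) \<le> chainf g (r-1) j"
      unfolding dv_def using assms by (auto split: if_splits)
    then have "chainf g (r-1) (Suc j) \<le> chainf g (r-1) j" using step by auto
    moreover have "chainf g r j \<le> chainf g r (Suc j)" by (rule chainf_mono_j)
    ultimately show ?case using step by auto
  qed
  have col: "chainf g i (c'-1) < chainf g i c'" if "r' \<le> i" "i \<le> r" for i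
    using that
  proof (induction i rule: dec_induct)
    case base
    have "chainf g r' c' = max (chainf g (r'-1) c') (chainf g r' (c'-1)) + g r' c'"
      using chainf_rec[of r' c' g] assms by simp
    then show ?case using g2 by simp
  next
    case (step i)
    have "dv g (Suc i) c' = 0" using nz step assms by auto
    then have "min (chainf g i c') (chainf g (Suc i) (c'-1)) \<le> chainf g i (c'-1)"
      unfolding dv_def using assms by (auto split: if_splits)
    then have "chainf g (Suc i) (c'-1) \<le> chainf g i (c'-1)" using step by auto
    moreover have "chainf g i c' \<le> chainf g (Suc i) c'" by (rule chainf_mono_i)
    ultimately show ?case using step by auto
  qed
  have "chainf g (r-1) (c'-1) < chainf g (r-1) c'" using col[of "r-1"] assms by auto
  moreover have "chainf g (r-1) (c'-1) < chainf g r (c'-1)" using row[of "c'-1"] assms by auto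
  ultimately have "dv g r c' \<noteq> 0" unfolding dv_def using assms by (auto simp: min_def)
  then show False using nz assms by auto
qed

lemma box:
  assumes d1: "dv g i j \<noteq> 0" and d2: "dv g i' j' \<noteq> 0" and "i' < i" "j < j'"
  shows "\<exists>a b. i' \<le> a \<and> a < i \<and> j \<le> b \<and> b < j' \<and> g a b \<noteq> 0"
proof (rule ccontr)
  assume nz: "\<not> ?thesis"
  note p1 = dv_pos[OF d1] and p2 = dv_pos[OF d2]
  have z1: "\<forall>a. i'-1 < a \<and> a \<le> i-1 \<longrightarrow> g a j = 0"
  proof (intro allI impI)
    fix a assume "i'-1 < a \<and> a \<le> i-1"
    moreover have "0 < i" "0 < i'" using p1 p2 by auto
    ultimately have "i' \<le> a" "a < i" by arith+
    then show "g a j = 0" using nz assms by auto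
  qed
  have z2: "\<forall>b. j-1 < b \<and> b \<le> j'-1 \<longrightarrow> g i' b = 0"
  proof (intro allI impI)
    fix b assume "j-1 < b \<and> b \<le> j'-1"
    moreover have "0 < j" "0 < j'" using p1 p2 by auto
    ultimately have "j \<le> b" "b < j'" by arith+
    then show "g i' b = 0" using nz assms by auto
  qed
  have "chainf g (i-1) j = max (chainf g (i-1) (j-1)) (chainf g (i'-1) j)"
    by (rule chainf_colzero) (use z1 assms p1 p2 in auto)
  then have A: "chainf g (i-1) (j-1) < chainf g (i'-1) j" using p1 by linarith
  have "chainf g i' (j'-1) = max (chainf g (i'-1) (j'-1)) (chainf g i' (j-1))"
    by (rule chainf_rowzero) (use z2 assms p1 p2 in auto)
  then have B: "chainf g (i'-1) (j'-1) < chainf g i' (j-1)" using p2 by linarith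
  have "chainf g i' (j-1) \<le> chainf g (i-1) (j-1)" by (rule chainf_mono) (use assms in auto)
  moreover have "chainf g (i'-1) j \<le> chainf g (i'-1) (j'-1)" by (rule chainf_mono) (use assms in auto)
  ultimately show False using A B by linarith
qed

lemma lcell:
  assumes d1: "dv g i j \<noteq> 0" shows "\<exists>b. 1 \<le> b \<and> b < j \<and> g i b \<noteq> 0"
proof (rule ccontr)
  assume nz: "\<not> ?thesis"
  note p1 = dv_pos[OF d1]
  have "chainf g i (j-1) = max (chainf g (i-1) (j-1)) (chainf g i 0)"
    by (rule chainf_rowzero) (use nz p1 in auto)
  then show False using p1 by simp
qed

lemma dcell:
  assumes d1: "dv g i j \<noteq> 0" shows "\<exists>a. 1 \<le> a \<and> a < i \<and> g a j \<noteq> 0"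
proof (rule ccontr)
  assume nz: "\<not> ?thesis"
  note p1 = dv_pos[OF d1]
  have "chainf g (i-1) j = max (chainf g (i-1) (j-1)) (chainf g 0 j)"
    by (rule chainf_colzero) (use nz p1 in auto)
  then show False using p1 by simp
qed


lemma V1:
  assumes "sechain g (Suc s) p q"
  shows "sechain (dv g) s p q"
proof -
  obtain c where c1: "\<forall>t\<in>{1..Suc s}. g (fst (c t)) (snd (c t)) \<noteq> 0 \<and> 1 \<le> fst (c t) \<and> fst (c t) \<le> p
        \<and> 1 \<le> snd (c t) \<and> snd (c t) \<le> q"
    and c2: "\<forall>t\<in>{1..<Suc s}. fst (c (Suc t)) < fst (c t) \<and> snd (c t) < snd (c (Suc t))"
    using assms unfolding sechain_def by blast
  have "\<forall>t\<in>{1..s}. \<exists>w. fst (c (Suc t)) < fst w \<and> fst w \<le> fst (c t) \<and> snd (c t) < snd w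
     \<and> snd w \<le> snd (c (Suc t)) \<and> dv g (fst w) (snd w) \<noteq> 0"
  proof
    fix t assume t: "t \<in> {1..s}"
    have "\<exists>a b. fst (c (Suc t)) < a \<and> a \<le> fst (c t) \<and> snd (c t) < b \<and> b \<le> snd (c (Suc t)) \<and> dv g a b \<noteq> 0"
      by (rule hook) (use c1 c2 t in auto)
    then show "\<exists>w. fst (c (Suc t)) < fst w \<and> fst w \<le> fst (c t) \<and> snd (c t) < snd w
     \<and> snd w \<le> snd (c (Suc t)) \<and> dv g (fst w) (snd w) \<noteq> 0" by auto
  qed
  then obtain w where w: "\<forall>t\<in>{1..s}. fst (c (Suc t)) < fst (w t) \<and> fst (w t) \<le> fst (c t) \<and> snd (c t) < snd (w t)
     \<and> snd (w t) \<le> snd (c (Suc t)) \<and> dv g (fst (w t)) (snd (w t)) \<noteq> 0"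
    by (metis (no_types) bchoice)
  have A: "\<forall>t\<in>{1..s}. dv g (fst (w t)) (snd (w t)) \<noteq> 0 \<and> 1 \<le> fst (w t) \<and> fst (w t) \<le> p
        \<and> 1 \<le> snd (w t) \<and> snd (w t) \<le> q"
  proof
    fix t assume t: "t \<in> {1..s}"
    then have "t \<in> {1..Suc s}" "Suc t \<in> {1..Suc s}" by auto
    then show "dv g (fst (w t)) (snd (w t)) \<noteq> 0 \<and> 1 \<le> fst (w t) \<and> fst (w t) \<le> p
        \<and> 1 \<le> snd (w t) \<and> snd (w t) \<le> q" using w c1 t by fastforce
  qed
  have B: "\<forall>t\<in>{1..<s}. fst (w (Suc t)) < fst (w t) \<and> snd (w t) < snd (w (Suc t))"
  proof
    fix t assume t: "t \<in> {1..<s}"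
    then have "t \<in> {1..s}" "Suc t \<in> {1..s}" by auto
    then show "fst (w (Suc t)) < fst (w t) \<and> snd (w t) < snd (w (Suc t))" using w
      by (metis (no_types, lifting) order_le_less_trans order_less_le_trans)
  qed
  show ?thesis unfolding sechain_def using A B by blast
qed

lemma V2:
  assumes "1 \<le> s" "sechain (dv g) s p q"
  shows "sechain g (Suc s) p q"
proof -
  obtain w where w1: "\<forall>t\<in>{1..s}. dv g (fst (w t)) (snd (w t)) \<noteq> 0 \<and> 1 \<le> fst (w t) \<and> fst (w t) \<le> p
        \<and> 1 \<le> snd (w t) \<and> snd (w t) \<le> q"
    and w2: "\<forall>t\<in>{1..<s}. fst (w (Suc t)) < fst (w t) \<and> snd (w t) < snd (w (Suc t))"
    using assms unfolding sechain_def by blast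
  have "\<forall>t\<in>{1..<s}. \<exists>x. fst (w (Suc t)) \<le> fst x \<and> fst x < fst (w t) \<and> snd (w t) \<le> snd x
     \<and> snd x < snd (w (Suc t)) \<and> g (fst x) (snd x) \<noteq> 0"
  proof
    fix t assume t: "t \<in> {1..<s}"
    have "\<exists>a b. fst (w (Suc t)) \<le> a \<and> a < fst (w t) \<and> snd (w t) \<le> b \<and> b < snd (w (Suc t)) \<and> g a b \<noteq> 0"
      by (rule box) (use w1 w2 t in auto)
    then show "\<exists>x. fst (w (Suc t)) \<le> fst x \<and> fst x < fst (w t) \<and> snd (w t) \<le> snd x
     \<and> snd x < snd (w (Suc t)) \<and> g (fst x) (snd x) \<noteq> 0" by auto
  qed
  then obtain X where X: "\<forall>t\<in>{1..<s}. fst (w (Suc t)) \<le> fst (X t) \<and> fst (X t) < fst (w t) \<and> snd (w t) \<le> snd (X t)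
     \<and> snd (X t) < snd (w (Suc t)) \<and> g (fst (X t)) (snd (X t)) \<noteq> 0"
    by (metis (no_types) bchoice)
  have "1 \<in> {1..s}" "s \<in> {1..s}" using assms by auto
  then have "dv g (fst (w 1)) (snd (w 1)) \<noteq> 0" "dv g (fst (w s)) (snd (w s)) \<noteq> 0"
    using w1 by auto
  then obtain b1 a1 where b1: "1 \<le> b1" "b1 < snd (w 1)" "g (fst (w 1)) b1 \<noteq> 0"
    and a1: "1 \<le> a1" "a1 < fst (w s)" "g a1 (snd (w s)) \<noteq> 0"
    using lcell[of g "fst (w 1)" "snd (w 1)"] dcell[of g "fst (w s)" "snd (w s)"] by blast
  define z where "z = (\<lambda>t. if t = 1 then (fst (w 1), b1) else if t \<le> s then X (t - 1) else (a1, snd (w s)))"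
  have A: "\<forall>t\<in>{1..Suc s}. g (fst (z t)) (snd (z t)) \<noteq> 0 \<and> 1 \<le> fst (z t) \<and> fst (z t) \<le> p
        \<and> 1 \<le> snd (z t) \<and> snd (z t) \<le> q"
  proof
    fix t assume t: "t \<in> {1..Suc s}"
    show "g (fst (z t)) (snd (z t)) \<noteq> 0 \<and> 1 \<le> fst (z t) \<and> fst (z t) \<le> p
        \<and> 1 \<le> snd (z t) \<and> snd (z t) \<le> q"
    proof (cases "t = 1")
      case True
      have "z t = (fst (w 1), b1)" using True unfolding z_def by simp
      moreover have "1 \<le> fst (w 1)" "fst (w 1) \<le> p" "snd (w 1) \<le> q" using w1 \<open>1 \<in> {1..s}\<close> by auto
      ultimately show ?thesis using b1 by auto
    next
      case False
      show ?thesis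
      proof (cases "t \<le> s")
        case True
        then have t1: "t - 1 \<in> {1..<s}" "t - 1 \<in> {1..s}" "t \<in> {1..s}" using False t by auto
        have st: "Suc (t - 1) = t" using False t by auto
        have zt: "z t = X (t - 1)" using False True unfolding z_def by simp
        have "fst (w t) \<le> fst (X (t-1))" "fst (X (t-1)) < fst (w (t-1))" "snd (w (t-1)) \<le> snd (X (t-1))"
          "snd (X (t-1)) < snd (w t)" "g (fst (X (t-1))) (snd (X (t-1))) \<noteq> 0"
          using X[rule_format, OF t1(1)] unfolding st by auto
        moreover have "1 \<le> fst (w t)" "fst (w (t-1)) \<le> p" "1 \<le> snd (w (t-1))" "snd (w t) \<le> q"
          using w1 t1 by auto
        ultimately show ?thesis unfolding zt by linarith
      next
        case False2: False
        then have "z t = (a1, snd (w s))" using False unfolding z_def by simp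
        moreover have "fst (w s) \<le> p" "1 \<le> snd (w s)" "snd (w s) \<le> q" using w1 \<open>s \<in> {1..s}\<close> by auto
        ultimately show ?thesis using a1 by auto
      qed
    qed
  qed
  have B: "\<forall>t\<in>{1..<Suc s}. fst (z (Suc t)) < fst (z t) \<and> snd (z t) < snd (z (Suc t))"
  proof
    fix t assume t: "t \<in> {1..<Suc s}"
    show "fst (z (Suc t)) < fst (z t) \<and> snd (z t) < snd (z (Suc t))"
    proof (cases "t = 1")
      case True
      have z1: "z t = (fst (w 1), b1)" using True unfolding z_def by simp
      show ?thesis
      proof (cases "s = 1")
        case True
        have "z (Suc t) = (a1, snd (w s))" using \<open>t = 1\<close> True unfolding z_def by simp
        then show ?thesis using z1 True a1 b1 by auto
      next
        case False
        then have "1 \<in> {1..<s}" using assms by auto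
        have "z (Suc t) = X 1" using \<open>t = 1\<close> False assms unfolding z_def by simp
        moreover have "fst (X 1) < fst (w 1)" "snd (w 1) \<le> snd (X 1)" using X \<open>1 \<in> {1..<s}\<close> by auto
        ultimately show ?thesis using z1 b1 by auto
      qed
    next
      case False
      show ?thesis
      proof (cases "t < s")
        case True
        then have t1: "t - 1 \<in> {1..<s}" "t \<in> {1..<s}" using False t by auto
        have st: "Suc (t - 1) = t" using False t by auto
        have "z t = X (t - 1)" "z (Suc t) = X t" using False True t unfolding z_def by auto
        moreover have "fst (w t) \<le> fst (X (t-1))" "snd (X (t-1)) < snd (w t)"
          using X[rule_format, OF t1(1)] unfolding st by auto
        moreover have "fst (X t) < fst (w t)" "snd (w t) \<le> snd (X t)" using X t1(2) by auto
        ultimately show ?thesis by auto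
      next
        case False2: False
        then have ts: "t = s" using t by auto
        then have t1: "t - 1 \<in> {1..<s}" using False t by auto
        have st: "Suc (t - 1) = t" using False t by auto
        have "z t = X (t - 1)" "z (Suc t) = (a1, snd (w s))" using False ts t unfolding z_def by auto
        moreover have "fst (w t) \<le> fst (X (t-1))" "snd (X (t-1)) < snd (w t)"
          using X[rule_format, OF t1(1)] unfolding st by auto
        ultimately show ?thesis using a1 ts by auto
      qed
    qed
  qed
  show ?thesis unfolding sechain_def using A B by blast
qed

lemma V: "1 \<le> s \<Longrightarrow> sechain (dv g) s p q \<longleftrightarrow> sechain g (Suc s) p q"
  using V1 V2 by blast

lemma sechain1: "sechain g 1 p q \<longleftrightarrow> 0 < chainf g p q"
proof
  assume "sechain g 1 p q"
  then obtain c where "g (fst (c 1)) (snd (c 1)) \<noteq> 0 \<and> 1 \<le> fst (c 1) \<and> fst (c 1) \<le> p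
        \<and> 1 \<le> snd (c 1) \<and> snd (c 1) \<le> q" unfolding sechain_def by auto
  then show "0 < chainf g p q" unfolding chainf_pos by blast
next
  assume "0 < chainf g p q"
  then obtain a b where ab: "1 \<le> a \<and> a \<le> p \<and> 1 \<le> b \<and> b \<le> q \<and> g a b \<noteq> 0"
    unfolding chainf_pos by blast
  show "sechain g 1 p q" unfolding sechain_def
    by (rule exI[of _ "\<lambda>_. (a,b)"]) (use ab in auto)
qed


fun gk :: "filling \<Rightarrow> nat \<Rightarrow> filling" where
  "gk f 0 = f"
| "gk f (Suc k) = dv (gk f k)"

lemma gk_sechain: "1 \<le> s \<Longrightarrow> sechain (gk f k) s p q \<longleftrightarrow> sechain f (s + k) p q"
proof (induction k arbitrary: s)
  case 0 then show ?case by simp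
next
  case (Suc k)
  have "sechain (gk f (Suc k)) s p q \<longleftrightarrow> sechain (gk f k) (Suc s) p q"
    using V[OF Suc.prems] by simp
  also have "\<dots> \<longleftrightarrow> sechain f (Suc s + k) p q" using Suc.IH by simp
  finally show ?case by simp
qed

lemma S: "0 < chainf (gk f k) p q \<longleftrightarrow> sechain f (Suc k) p q"
  using gk_sechain[of 1 f k p q] sechain1 by simp




lemma is_dpart_iff: "is_dpart d l \<longleftrightarrow> length l = d \<and> (\<forall>k. Suc k < d \<longrightarrow> l ! Suc k \<le> l ! k)"
  unfolding is_dpart_def
  by (subst sorted_wrt_iff_nth_Suc_transp) (auto simp: transp_def)

lemma cp_iff: "cyl_prec d L a b \<longleftrightarrow> length a = d \<and> length b = d \<and>
   (\<forall>k. Suc k < d \<longrightarrow> a ! Suc k \<le> a ! k) \<and> (\<forall>k. Suc k < d \<longrightarrow> b ! Suc k \<le> b ! k) \<and>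
   (\<forall>k<d. a ! k \<le> b ! k) \<and> (\<forall>k. Suc k < d \<longrightarrow> b ! Suc k \<le> a ! k) \<and> b ! 0 \<le> a ! (d-1) + L"
  unfolding cyl_prec_def is_dpart_iff by auto

locale cz =
  fixes d L :: nat
  assumes dpos: "0 < d"
begin

definition zs :: "nat list" where "zs = replicate d 0"

definition F :: "nat list \<Rightarrow> nat list \<Rightarrow> nat list \<Rightarrow> nat \<Rightarrow> nat list" where
  "F ka mu nu x = map (\<lambda>k. max (mu!k) (nu!k) + (if k = 0 then x + (min (mu!(d-1)) (nu!(d-1)) - ka!(d-1))
      else min (mu!(k-1)) (nu!(k-1)) - ka!(k-1))) [0..<d]"

definition Gk :: "nat list \<Rightarrow> nat list \<Rightarrow> nat list \<Rightarrow> nat list" where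
  "Gk mu nu rho = map (\<lambda>k. if k < d - 1 then min (mu!k) (nu!k) + max (mu!(Suc k)) (nu!(Suc k)) - rho!(Suc k)
      else min (mu!(d-1)) (nu!(d-1)) - (rho!0 - max (mu!0) (nu!0))) [0..<d]"

definition Gx :: "nat list \<Rightarrow> nat list \<Rightarrow> nat list \<Rightarrow> nat" where
  "Gx mu nu rho = (rho!0 - max (mu!0) (nu!0)) - min (mu!(d-1)) (nu!(d-1))"

definition lv :: "nat list \<Rightarrow> nat list \<Rightarrow> nat list \<Rightarrow> nat \<Rightarrow> nat list \<Rightarrow> bool" where
  "lv ka mu nu x rho \<longleftrightarrow> (0 < x \<longrightarrow> ka!(d-1) = 0) \<and> rho!0 \<le> min (mu!(d-1)) (nu!(d-1)) + L"

abbreviation cp where "cp \<equiv> cyl_prec d L"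

lemma length_F[simp]: "length (F ka mu nu x) = d" by (simp add: F_def)
lemma length_Gk[simp]: "length (Gk mu nu rho) = d" by (simp add: Gk_def)
lemma length_zs[simp]: "length zs = d" by (simp add: zs_def)
lemma zs_nth[simp]: "k < d \<Longrightarrow> zs ! k = 0" by (simp add: zs_def)

lemma F_nth: "k < d \<Longrightarrow> F ka mu nu x ! k = max (mu!k) (nu!k) + (if k = 0 then x + (min (mu!(d-1)) (nu!(d-1)) - ka!(d-1))
      else min (mu!(k-1)) (nu!(k-1)) - ka!(k-1))"
  by (simp add: F_def)

lemma Gk_nth: "k < d \<Longrightarrow> Gk mu nu rho ! k = (if k < d - 1 then min (mu!k) (nu!k) + max (mu!(Suc k)) (nu!(Suc k)) - rho!(Suc k)
      else min (mu!(d-1)) (nu!(d-1)) - (rho!0 - max (mu!0) (nu!0)))"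
  by (simp add: Gk_def)

lemma F_sym: "F ka mu nu x = F ka nu mu x"
  unfolding F_def by (simp add: max.commute min.commute)

lemma lv_sym: "lv ka mu nu x rho = lv ka nu mu x rho"
  unfolding lv_def by (simp add: min.commute)

lemma cp_zs: "cp zs zs" unfolding cp_iff using dpos by simp

lemma LF:
  assumes "cp ka mu" "cp ka nu" "lv ka mu nu x (F ka mu nu x)"
  shows "cp mu (F ka mu nu x)"
proof -
  note A = assms(1,2)[unfolded cp_iff]
  have l0: "F ka mu nu x ! 0 \<le> min (mu!(d-1)) (nu!(d-1)) + L" using assms(3) unfolding lv_def by simp
  have s1: "F ka mu nu x ! Suc k \<le> min (mu!k) (nu!k)" if "Suc k < d" for k
  proof -
    have "mu ! Suc k \<le> ka ! k" "nu ! Suc k \<le> ka ! k" "ka ! k \<le> mu ! k" "ka ! k \<le> nu ! k" using A that by auto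
    then show ?thesis using that by (auto simp: F_nth max_def min_def)
  qed
  have s2: "max (mu!k) (nu!k) \<le> F ka mu nu x ! k" if "k < d" for k
    using that by (simp add: F_nth)
  show ?thesis unfolding cp_iff
  proof (intro conjI allI impI)
    show "F ka mu nu x ! 0 \<le> mu ! (d - 1) + L" using l0 by simp
  next
    fix k assume "Suc k < d"
    then show "F ka mu nu x ! Suc k \<le> F ka mu nu x ! k"
      using s1[of k] s2[of k] by simp
  next
    fix k assume "Suc k < d"
    then show "F ka mu nu x ! Suc k \<le> mu ! k"
      using s1[of k] by simp
  next
    fix k assume "k < d"
    then show "mu ! k \<le> F ka mu nu x ! k" using s2[of k] by simp
  qed (use A in auto)
qed

lemma LF2:
  assumes "cp ka mu" "cp ka nu" "lv ka mu nu x (F ka mu nu x)"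
  shows "cp nu (F ka mu nu x)"
  using LF[of ka nu mu x] assms by (simp add: F_sym lv_sym)


lemma aux1: "(a::nat) \<le> r \<Longrightarrow> k = m - (r - a) \<Longrightarrow> x = (r - a) - m \<Longrightarrow> a + (x + (m - k)) = r"
  by arith

lemma aux2: "(a::nat) \<le> r \<Longrightarrow> r \<le> m \<Longrightarrow> k = m + a - r \<Longrightarrow> f = a + (m - k) \<Longrightarrow> f = r"
  by arith

lemma LB:
  assumes "cp mu rho" "cp nu rho"
  shows "cp (Gk mu nu rho) mu \<and> cp (Gk mu nu rho) nu \<and> lv (Gk mu nu rho) mu nu (Gx mu nu rho) rho
     \<and> F (Gk mu nu rho) mu nu (Gx mu nu rho) = rho"
proof -
  define ka where "ka = Gk mu nu rho"
  define x where "x = Gx mu nu rho"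
  note A = assms[unfolded cp_iff]
  have r0: "max (mu!0) (nu!0) \<le> rho!0" "rho!0 \<le> min (mu!(d-1)) (nu!(d-1)) + L"
    using A dpos by auto
  have b1: "ka!k \<le> min (mu!k) (nu!k)" if "k < d" for k
  proof (cases "k < d - 1")
    case True
    then have "max (mu!(Suc k)) (nu!(Suc k)) \<le> rho!(Suc k)" using A by auto
    then show ?thesis using True that unfolding ka_def by (simp add: Gk_nth max_def min_def)
  next
    case False
    then have "k = d - 1" using that by auto
    then show ?thesis using False that unfolding ka_def by (simp add: Gk_nth min_def)
  qed
  have b2: "max (mu!(Suc k)) (nu!(Suc k)) \<le> ka!k" if "Suc k < d" for k
  proof -
    have "rho!(Suc k) \<le> min (mu!k) (nu!k)" using A that by auto
    moreover have "k < d - 1" using that by auto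
    ultimately show ?thesis using that unfolding ka_def by (simp add: Gk_nth max_def min_def)
  qed
  have b3: "max (mu!0) (nu!0) \<le> ka!(d-1) + L"
    using r0 dpos unfolding ka_def by (auto simp: Gk_nth)
  have cpk: "cp ka mu \<and> cp ka nu" unfolding cp_iff
  proof (intro conjI allI impI)
    fix k assume k: "Suc k < d"
    show "ka ! Suc k \<le> ka ! k" using b1[of "Suc k"] b2[of k] k by auto
  next
    fix k assume k: "Suc k < d"
    show "ka ! Suc k \<le> ka ! k" using b1[of "Suc k"] b2[of k] k by auto
  qed (use A b1 b2 b3 in \<open>auto simp: ka_def\<close>)
  have lvk: "lv ka mu nu x rho"
    unfolding lv_def x_def ka_def using r0 dpos by (auto simp: Gx_def Gk_nth)
  have Fk: "F ka mu nu x = rho"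
  proof (rule nth_equalityI)
    show "length (F ka mu nu x) = length rho" using A by simp
  next
    fix k assume "k < length (F ka mu nu x)"
    then have k: "k < d" by simp
    show "F ka mu nu x ! k = rho ! k"
    proof (cases "k = 0")
      case True
      have "ka!(d-1) = min (mu!(d-1)) (nu!(d-1)) - (rho!0 - max (mu!0) (nu!0))"
        unfolding ka_def using dpos by (simp add: Gk_nth)
      moreover have "F ka mu nu x ! 0 = max (mu!0) (nu!0) + (x + (min (mu!(d-1)) (nu!(d-1)) - ka!(d-1)))"
        using dpos by (simp add: F_nth)
      moreover have "x = (rho!0 - max (mu!0) (nu!0)) - min (mu!(d-1)) (nu!(d-1))" unfolding x_def Gx_def ..
      ultimately show ?thesis using True r0(1) aux1 by metis
    next
      case False
      then have k1: "k - 1 < d - 1" "Suc (k-1) = k" using k by auto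
      have "ka!(k-1) = min (mu!(k-1)) (nu!(k-1)) + max (mu!k) (nu!k) - rho!k"
        unfolding ka_def using k1 k by (simp add: Gk_nth)
      moreover have "max (mu!k) (nu!k) \<le> rho!k" using A k by auto
      moreover have "\<forall>j. Suc j < d \<longrightarrow> rho!Suc j \<le> mu!j" "\<forall>j. Suc j < d \<longrightarrow> rho!Suc j \<le> nu!j"
        using assms unfolding cp_iff by blast+
      then have "rho!Suc (k-1) \<le> mu!(k-1)" "rho!Suc (k-1) \<le> nu!(k-1)"
        using k1 k by (metis Suc_lessI less_imp_Suc_add add_Suc_right)+
      then have "rho!k \<le> min (mu!(k-1)) (nu!(k-1))" using k1 by simp
      moreover have "F ka mu nu x ! k = max (mu!k) (nu!k) + (min (mu!(k-1)) (nu!(k-1)) - ka!(k-1))"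
        using False k by (simp add: F_nth)
      ultimately show ?thesis using aux2 by metis
    qed
  qed
  show ?thesis using cpk lvk Fk unfolding ka_def x_def by blast
qed

lemma LFB:
  assumes "cp ka mu" "cp ka nu" "lv ka mu nu x (F ka mu nu x)"
  shows "Gk mu nu (F ka mu nu x) = ka \<and> Gx mu nu (F ka mu nu x) = x"
proof -
  note A = assms(1,2)[unfolded cp_iff]
  have lvv: "0 < x \<longrightarrow> ka!(d-1) = 0" using assms(3) unfolding lv_def by simp
  have kle: "ka!k \<le> min (mu!k) (nu!k)" if "k < d" for k using A that by auto
  have F0: "F ka mu nu x ! 0 = max (mu!0) (nu!0) + (x + (min (mu!(d-1)) (nu!(d-1)) - ka!(d-1)))"
    using dpos by (simp add: F_nth)
  have G1: "Gk mu nu (F ka mu nu x) = ka"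
  proof (rule nth_equalityI)
    show "length (Gk mu nu (F ka mu nu x)) = length ka" using A by simp
  next
    fix k assume "k < length (Gk mu nu (F ka mu nu x))"
    then have k: "k < d" by simp
    show "Gk mu nu (F ka mu nu x) ! k = ka ! k"
    proof (cases "k < d - 1")
      case True
      have "F ka mu nu x ! Suc k = max (mu!Suc k) (nu!Suc k) + (min (mu!k) (nu!k) - ka!k)"
        using True by (simp add: F_nth)
      then show ?thesis using True k kle[of k] by (simp add: Gk_nth max_def min_def)
    next
      case False
      then have kd: "k = d - 1" using k by auto
      show ?thesis using kd k F0 kle[of k] lvv by (cases "x = 0") (auto simp: Gk_nth)
    qed
  qed
  have G2: "Gx mu nu (F ka mu nu x) = x"
    using F0 lvv unfolding Gx_def by (cases "x = 0") auto
  show ?thesis using G1 G2 by blast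
qed

lemma size_F:
  assumes "length ka = d" "\<forall>k<d. ka!k \<le> mu!k \<and> ka!k \<le> nu!k"
    and that: "length mu = d" "length nu = d"
  shows "sum_list (F ka mu nu x) + sum_list ka = sum_list mu + sum_list nu + x"
proof -
  define M where "M k = max (mu!k) (nu!k)" for k
  define m where "m k = min (mu!k) (nu!k)" for k
  define w where "w k = (if k = 0 then m (d-1) - ka!(d-1) else m (k-1) - ka!(k-1))" for k
  have Fn: "F ka mu nu x ! k = M k + w k + (if k = 0 then x else 0)" if "k < d" for k
    using that by (simp add: F_nth M_def m_def w_def)
  obtain d' where d': "d = Suc d'" using dpos by (cases d) auto
  have "(\<Sum>k<d. w k) = w 0 + (\<Sum>k<d'. w (Suc k))" unfolding d' by (rule sum.lessThan_Suc_shift)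
  also have "\<dots> = (m d' - ka!d') + (\<Sum>k<d'. m k - ka!k)" by (simp add: w_def d')
  also have "\<dots> = (\<Sum>k<d. m k - ka!k)" unfolding d' by simp
  finally have sw: "(\<Sum>k<d. w k) = (\<Sum>k<d. m k - ka!k)" .
  have "sum_list (F ka mu nu x) = (\<Sum>k<d. F ka mu nu x ! k)"
    by (simp add: sum_list_sum_nth atLeast0LessThan)
  also have "\<dots> = (\<Sum>k<d. M k + w k + (if k = 0 then x else 0))"
    by (rule sum.cong) (auto simp: Fn)
  also have "\<dots> = (\<Sum>k<d. M k) + (\<Sum>k<d. w k) + x"
    using dpos by (simp add: sum.distrib)
  finally have sF: "sum_list (F ka mu nu x) = (\<Sum>k<d. M k) + (\<Sum>k<d. m k - ka!k) + x" using sw by simp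
  have sk: "sum_list ka = (\<Sum>k<d. ka!k)" using assms by (simp add: sum_list_sum_nth atLeast0LessThan)
  have smu: "sum_list mu = (\<Sum>k<d. mu!k)" using that by (simp add: sum_list_sum_nth atLeast0LessThan)
  have snu: "sum_list nu = (\<Sum>k<d. nu!k)" using that by (simp add: sum_list_sum_nth atLeast0LessThan)
  have "(\<Sum>k<d. m k - ka!k) + (\<Sum>k<d. ka!k) = (\<Sum>k<d. m k)"
    by (subst sum.distrib[symmetric]) (rule sum.cong, auto simp: m_def assms)
  moreover have "(\<Sum>k<d. M k) + (\<Sum>k<d. m k) = (\<Sum>k<d. mu!k) + (\<Sum>k<d. nu!k)"
    by (simp add: sum.distrib[symmetric] M_def m_def, rule sum.cong, auto simp: max_def min_def)
  ultimately show ?thesis using sF sk smu snu by simp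
qed

end



context cz begin

fun lab :: "filling \<Rightarrow> nat \<Rightarrow> nat \<Rightarrow> nat list" where
  "lab f 0 j = zs"
| "lab f (Suc i) 0 = zs"
| "lab f (Suc i) (Suc j) = F (lab f i j) (lab f i (Suc j)) (lab f (Suc i) j) (f (Suc i) (Suc j))"

lemma lab_0[simp]: "lab f i 0 = zs" by (cases i) auto

lemma lab_rec: "0 < i \<Longrightarrow> 0 < j \<Longrightarrow>
  lab f i j = F (lab f (i-1) (j-1)) (lab f (i-1) j) (lab f i (j-1)) (f i j)"
  by (cases i; cases j) auto

lemma length_lab[simp]: "length (lab f i j) = d"
  by (induction f i j rule: lab.induct) auto

lemma lab_mono_i: "k < d \<Longrightarrow> lab f i j ! k \<le> lab f (Suc i) j ! k"
  by (cases j) (auto simp: F_nth)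

lemma lab_mono_j: "k < d \<Longrightarrow> lab f i j ! k \<le> lab f i (Suc j) ! k"
  by (cases i) (auto simp: F_nth)

lemma lab_mono: "i \<le> i' \<Longrightarrow> j \<le> j' \<Longrightarrow> k < d \<Longrightarrow> lab f i j ! k \<le> lab f i' j' ! k"
proof -
  assume a: "i \<le> i'" "j \<le> j'" "k < d"
  have "lab f i j ! k \<le> lab f i' j ! k"
    using a(1) by (induction rule: dec_induct) (auto intro: order_trans[OF _ lab_mono_i[OF a(3)]])
  also have "\<dots> \<le> lab f i' j' ! k"
    using a(2) by (induction rule: dec_induct) (auto intro: order_trans[OF _ lab_mono_j[OF a(3)]])
  finally show ?thesis .
qed

lemma lab_reflect: "lab (reflect f) i j = lab f j i"
proof (induction "reflect f" i j rule: lab.induct)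
  case (3 i j)
  then show ?case by (simp add: reflect_def F_sym)
qed auto

lemma lab_row1:
  assumes "\<forall>a b. 1 \<le> a \<longrightarrow> a \<le> p \<longrightarrow> 1 \<le> b \<longrightarrow> b \<le> q \<longrightarrow>
      min (lab f (a-1) b ! (d-1)) (lab f a (b-1) ! (d-1)) = 0"
  shows "lab f p q ! 0 = chainf f p q"
  using assms
proof (induction f p q rule: lab.induct)
  case (1 f j) then show ?case using dpos by simp
next
  case (2 f i) then show ?case using dpos by simp
next
  case (3 f i j)
  have w: "min (lab f i (Suc j) ! (d-1)) (lab f (Suc i) j ! (d-1)) = 0"
    using "3.prems"[rule_format, of "Suc i" "Suc j"] by simp
  have h1: "lab f i (Suc j) ! 0 = chainf f i (Suc j)"
    by (rule "3.IH"(2)) (use "3.prems" in auto)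
  have h2: "lab f (Suc i) j ! 0 = chainf f (Suc i) j"
    by (rule "3.IH"(3)) (use "3.prems" in auto)
  show ?case using w h1 h2 dpos by (simp add: F_nth)
qed

lemma lab_O:
  assumes "\<forall>a b. a \<le> p \<longrightarrow> b \<le> q \<longrightarrow> lab f a b ! (d-1) = 0 \<or> chainf (gk f (d-1)) a b = 0"
    and "k < d"
  shows "lab f p q ! k = chainf (gk f k) p q"
  using assms
proof (induction f p q arbitrary: k rule: lab.induct)
  case (1 f j) then show ?case by simp
next
  case (2 f i) then show ?case by simp
next
  case (3 f i j)
  have IH1: "lab f i j ! k = chainf (gk f k) i j" if "k < d" for k
    by (rule "3.IH"(1)) (use "3.prems" that in auto)
  have IH2: "lab f i (Suc j) ! k = chainf (gk f k) i (Suc j)" if "k < d" for k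
    by (rule "3.IH"(2)) (use "3.prems" that in auto)
  have IH3: "lab f (Suc i) j ! k = chainf (gk f k) (Suc i) j" if "k < d" for k
    by (rule "3.IH"(3)) (use "3.prems" that in auto)
  have z: "lab f (Suc i) j ! (d-1) = 0"
    using "3.prems"(1)[rule_format, of "Suc i" j] IH3[of "d-1"] dpos by auto
  show ?case
  proof (cases k)
    case 0
    then show ?thesis using z IH2[of 0] IH3[of 0] dpos by (simp add: F_nth)
  next
    case (Suc k')
    then have "k' < d" "k < d" using "3.prems" by auto
    then show ?thesis using Suc IH1[of k'] IH2 IH3 IH2[of k'] IH3[of k']
      by (simp add: F_nth dv_def)
  qed
qed

lemma lab_dzero_iff: "lab f p q ! (d-1) = 0 \<longleftrightarrow> \<not> sechain f d p q"
proof
  assume z: "lab f p q ! (d-1) = 0"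
  have "\<forall>a b. a \<le> p \<longrightarrow> b \<le> q \<longrightarrow> lab f a b ! (d-1) = 0 \<or> chainf (gk f (d-1)) a b = 0"
    using lab_mono[of _ p _ q "d-1" f] z dpos by fastforce
  then have "chainf (gk f (d-1)) p q = 0" using lab_O[of p q f "d-1"] z dpos by auto
  then show "\<not> sechain f d p q" using S[of f "d-1" p q] dpos by auto
next
  assume ns: "\<not> sechain f d p q"
  then have z: "chainf (gk f (d-1)) p q = 0" using S[of f "d-1" p q] dpos by auto
  have "\<forall>a b. a \<le> p \<longrightarrow> b \<le> q \<longrightarrow> lab f a b ! (d-1) = 0 \<or> chainf (gk f (d-1)) a b = 0"
    using chainf_mono[of _ p _ q "gk f (d-1)"] z by fastforce
  then show "lab f p q ! (d-1) = 0" using lab_O[of p q f "d-1"] z dpos by auto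
qed

end



lemma ne_chain_butlast:
  assumes "ne_chain f (ys @ [z])" shows "ne_chain f ys"
proof -
  have "\<forall>k. Suc k < length ys \<longrightarrow> fst (ys ! k) \<le> fst (ys ! Suc k) \<and> snd (ys ! k) \<le> snd (ys ! Suc k)"
  proof (intro allI impI)
    fix k assume k: "Suc k < length ys"
    then show "fst (ys ! k) \<le> fst (ys ! Suc k) \<and> snd (ys ! k) \<le> snd (ys ! Suc k)"
      using assms unfolding ne_chain_def
      by (metis (no_types, lifting) length_append_singleton less_SucI nth_append_left Suc_lessD)
  qed
  then show ?thesis using assms unfolding ne_chain_def by auto
qed

lemma ne_chain_last_le:
  assumes "ne_chain f ys" "k < length ys"
  shows "fst (ys ! k) \<le> fst (last ys) \<and> snd (ys ! k) \<le> snd (last ys)"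
proof -
  have "fst (ys ! k) \<le> fst (ys ! (k + t)) \<and> snd (ys ! k) \<le> snd (ys ! (k + t))" if "k + t < length ys" for t
    using that
  proof (induction t)
    case 0 then show ?case by simp
  next
    case (Suc t)
    then have "fst (ys ! (k + t)) \<le> fst (ys ! Suc (k + t)) \<and> snd (ys ! (k+t)) \<le> snd (ys ! Suc (k+t))"
      using assms(1) unfolding ne_chain_def by auto
    then show ?case using Suc by auto
  qed
  moreover have "ys \<noteq> []" using assms(2) by auto
  ultimately show ?thesis using assms(2) \<open>ys \<noteq> []\<close>
    by (metis Suc_diff_1 last_conv_nth le_add_diff_inverse length_greater_0_conv lessI less_Suc_eq_le)
qed

lemma chain_upper:
  assumes "is_filling n m f" "ne_chain f cs" "cs \<noteq> []"
  shows "chain_length f cs \<le> chainf f (fst (last cs)) (snd (last cs))"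
  using assms(2,3)
proof (induction cs rule: rev_induct)
  case Nil then show ?case by simp
next
  case (snoc z ys)
  obtain a b where z: "z = (a, b)" by (cases z)
  have fz: "f a b \<noteq> 0" using snoc.prems z unfolding ne_chain_def entry_def by auto
  then have ab: "1 \<le> a" "1 \<le> b" using assms(1) unfolding is_filling_def by auto
  have cr: "chainf f a b = max (chainf f (a-1) b) (chainf f a (b-1)) + f a b"
    using chainf_rec[of a b f] ab by simp
  show ?case
  proof (cases "ys = []")
    case True
    then show ?thesis using z cr by (simp add: chain_length_def entry_def)
  next
    case False
    have ny: "ne_chain f ys" using ne_chain_butlast snoc.prems by blast
    have IH: "chain_length f ys \<le> chainf f (fst (last ys)) (snd (last ys))"
      using snoc.IH ny False by blast
    have "fst (last ys) \<le> a \<and> snd (last ys) \<le> b"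
    proof -
      have "length ys - 1 < length ys" "Suc (length ys - 1) < length (ys @ [z])" using False by auto
      define k where "k = length ys - 1"
      have k: "Suc k < length (ys @ [z])" "(ys @ [z]) ! k = last ys" "(ys @ [z]) ! Suc k = z"
        using False by (auto simp: k_def nth_append last_conv_nth)
      then show ?thesis using snoc.prems(1) z unfolding ne_chain_def by (metis fst_conv snd_conv)
    qed
    moreover have "last ys \<noteq> z" using snoc.prems(1) False unfolding ne_chain_def by auto
    ultimately have "chainf f (fst (last ys)) (snd (last ys)) \<le> max (chainf f (a-1) b) (chainf f a (b-1))"
    proof (cases "fst (last ys) < a")
      case True
      then have "chainf f (fst (last ys)) (snd (last ys)) \<le> chainf f (a-1) b"
        using \<open>fst (last ys) \<le> a \<and> snd (last ys) \<le> b\<close> by (intro chainf_mono) auto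
      then show ?thesis by auto
    next
      case False
      assume h: "fst (last ys) \<le> a \<and> snd (last ys) \<le> b" "last ys \<noteq> z"
      then have "snd (last ys) < b" using False z by (metis le_neq_implies_less not_less prod.collapse)
      then have "chainf f (fst (last ys)) (snd (last ys)) \<le> chainf f a (b-1)"
        using h by (intro chainf_mono) auto
      then show ?thesis by auto
    qed
    then show ?thesis using IH z cr by (simp add: chain_length_def entry_def)
  qed
qed

lemma chain_upper_nm:
  assumes "is_filling n m f" "ne_chain f cs"
  shows "chain_length f cs \<le> chainf f n m"
proof (cases "cs = []")
  case True then show ?thesis by (simp add: chain_length_def)
next
  case False
  then have "entry f (last cs) \<noteq> 0" using assms(2) unfolding ne_chain_def by auto
  then have "fst (last cs) \<le> n" "snd (last cs) \<le> m" using assms(1) unfolding is_filling_def entry_def by auto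
  then show ?thesis using chain_upper[OF assms False] chainf_mono by (meson order_trans)
qed

lemma ne_chain_snoc:
  assumes "ne_chain f ys" "z \<notin> set ys" "entry f z \<noteq> 0"
    "ys \<noteq> [] \<longrightarrow> fst (last ys) \<le> fst z \<and> snd (last ys) \<le> snd z"
  shows "ne_chain f (ys @ [z])"
proof -
  have A: "distinct (ys @ [z])" using assms unfolding ne_chain_def by auto
  have B: "\<forall>c\<in>set (ys @ [z]). entry f c \<noteq> 0" using assms unfolding ne_chain_def by auto
  have C: "fst ((ys @ [z]) ! k) \<le> fst ((ys @ [z]) ! Suc k) \<and> snd ((ys @ [z]) ! k) \<le> snd ((ys @ [z]) ! Suc k)"
    if k: "Suc k < length (ys @ [z])" for k
  proof -
  show "fst ((ys @ [z]) ! k) \<le> fst ((ys @ [z]) ! Suc k) \<and> snd ((ys @ [z]) ! k) \<le> snd ((ys @ [z]) ! Suc k)"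
  proof (cases "Suc k < length ys")
    case True
    then show ?thesis using assms(1) unfolding ne_chain_def by (simp add: nth_append)
  next
    case False
    then have "Suc k = length ys" using k by auto
    then have k': "k = length ys - 1" "ys \<noteq> []" by auto
    then have "(ys @ [z]) ! k = last ys" by (simp add: nth_append last_conv_nth)
    moreover have "(ys @ [z]) ! Suc k = z" using \<open>Suc k = length ys\<close> by (simp add: nth_append)
    ultimately have "ys \<noteq> []" "(ys @ [z]) ! k = last ys" "(ys @ [z]) ! Suc k = z" using k' by auto
    then show ?thesis using assms(4) by auto
  qed
  qed
  show ?thesis unfolding ne_chain_def using A B C by blast
qed

lemma chain_exists:
  "\<exists>cs. ne_chain f cs \<and> (\<forall>c\<in>set cs. fst c \<le> p \<and> snd c \<le> q) \<and> chain_length f cs = chainf f p q"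
proof (induction f p q rule: chainf.induct)
  case (1 g j)
  then show ?case by (intro exI[of _ "[]"]) (auto simp: ne_chain_def chain_length_def)
next
  case (2 g i)
  then show ?case by (intro exI[of _ "[]"]) (auto simp: ne_chain_def chain_length_def)
next
  case (3 g i j)
  obtain cs where cs: "ne_chain g cs" "(\<forall>c\<in>set cs. fst c \<le> Suc i \<and> snd c \<le> Suc j)"
     "(\<forall>c\<in>set cs. fst c \<le> i \<or> snd c \<le> j)"
     "chain_length g cs = max (chainf g i (Suc j)) (chainf g (Suc i) j)"
  proof (cases "chainf g (Suc i) j \<le> chainf g i (Suc j)")
    case True
    then show ?thesis using 3(1) that by (auto simp: max_def) (meson le_SucI)
  next
    case False
    then show ?thesis using 3(2) that by (auto simp: max_def) (meson le_SucI)
  qed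
  show ?case
  proof (cases "g (Suc i) (Suc j) = 0")
    case True
    then show ?thesis using cs by (intro exI[of _ cs]) auto
  next
    case False
    have "(Suc i, Suc j) \<notin> set cs" using cs(3) by fastforce
    moreover have "cs \<noteq> [] \<longrightarrow> fst (last cs) \<le> Suc i \<and> snd (last cs) \<le> Suc j"
      using cs(2) by auto
    ultimately have "ne_chain g (cs @ [(Suc i, Suc j)])"
      using ne_chain_snoc[OF cs(1)] False by (simp add: entry_def)
    then show ?thesis using cs False
      by (intro exI[of _ "cs @ [(Suc i, Suc j)]"]) (auto simp: chain_length_def entry_def)
  qed
qed

lemma pattern_iff:
  assumes "is_filling n m f" "0 < d"
  shows "contains_pattern d f \<longleftrightarrow> (\<exists>i j. f i j \<noteq> 0 \<and> sechain f d (i-1) (j-1))"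
proof
  assume "contains_pattern d f"
  then obtain c where c1: "\<forall>i\<in>{1..d+1}. entry f (c i) \<noteq> 0"
    and c2: "\<forall>i\<in>{1..<d}. fst (c (i+1)) < fst (c i) \<and> snd (c i) < snd (c (i+1))"
    and c3: "\<forall>i\<in>{1..d}. fst (c i) < fst (c (d+1)) \<and> snd (c i) < snd (c (d+1))"
    unfolding contains_pattern_def by blast
  have "f (fst (c (d+1))) (snd (c (d+1))) \<noteq> 0" using c1 by (auto simp: entry_def)
  moreover have "sechain f d (fst (c (d+1)) - 1) (snd (c (d+1)) - 1)"
  proof -
    have A: "\<forall>t\<in>{1..d}. f (fst (c t)) (snd (c t)) \<noteq> 0 \<and> 1 \<le> fst (c t) \<and> fst (c t) \<le> fst (c (d + 1)) - 1 \<and>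
         1 \<le> snd (c t) \<and> snd (c t) \<le> snd (c (d + 1)) - 1"
    proof
      fix t assume t: "t \<in> {1..d}"
      then have "f (fst (c t)) (snd (c t)) \<noteq> 0" using c1 by (auto simp: entry_def)
      then show "f (fst (c t)) (snd (c t)) \<noteq> 0 \<and> 1 \<le> fst (c t) \<and> fst (c t) \<le> fst (c (d + 1)) - 1 \<and>
         1 \<le> snd (c t) \<and> snd (c t) \<le> snd (c (d + 1)) - 1"
        using c3 t assms(1) unfolding is_filling_def by fastforce
    qed
    have B: "\<forall>t\<in>{1..<d}. fst (c (Suc t)) < fst (c t) \<and> snd (c t) < snd (c (Suc t))" using c2 by auto
    show ?thesis unfolding sechain_def using A B by blast
  qed
  ultimately show "\<exists>i j. f i j \<noteq> 0 \<and> sechain f d (i-1) (j-1)" by blast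
next
  assume "\<exists>i j. f i j \<noteq> 0 \<and> sechain f d (i-1) (j-1)"
  then obtain i j c where fij: "f i j \<noteq> 0"
    and c1: "\<forall>t\<in>{1..d}. f (fst (c t)) (snd (c t)) \<noteq> 0 \<and> 1 \<le> fst (c t) \<and> fst (c t) \<le> i - 1
        \<and> 1 \<le> snd (c t) \<and> snd (c t) \<le> j - 1"
    and c2: "\<forall>t\<in>{1..<d}. fst (c (Suc t)) < fst (c t) \<and> snd (c t) < snd (c (Suc t))"
    unfolding sechain_def by blast
  have ij: "1 \<le> i" "1 \<le> j" using fij assms(1) unfolding is_filling_def by auto
  define c' where "c' = c(d+1 := (i, j))"
  have A: "\<forall>t\<in>{1..d+1}. entry f (c' t) \<noteq> 0"
  proof
    fix t assume t: "t \<in> {1..d+1}"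
    show "entry f (c' t) \<noteq> 0"
    proof (cases "t = d+1")
      case True then show ?thesis using fij by (simp add: c'_def entry_def)
    next
      case False then show ?thesis using c1 t by (simp add: c'_def entry_def)
    qed
  qed
  have B: "\<forall>t\<in>{1..<d}. fst (c' (t + 1)) < fst (c' t) \<and> snd (c' t) < snd (c' (t + 1))"
    using c2 by (simp add: c'_def)
  have C: "\<forall>t\<in>{1..d}. fst (c' t) < fst (c' (d + 1)) \<and> snd (c' t) < snd (c' (d + 1))"
    using c1 ij by (fastforce simp: c'_def)
  show "contains_pattern d f" unfolding contains_pattern_def using A B C by blast
qed




context cz begin

definition lvc :: "filling \<Rightarrow> nat \<Rightarrow> nat \<Rightarrow> bool" where
  "lvc f i j \<longleftrightarrow> lv (lab f (i-1) (j-1)) (lab f (i-1) j) (lab f i (j-1)) (f i j) (lab f i j)"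

abbreviation VR where "VR f p q \<equiv> (\<forall>a b. 1 \<le> a \<longrightarrow> a \<le> p \<longrightarrow> 1 \<le> b \<longrightarrow> b \<le> q \<longrightarrow> lvc f a b)"

lemma GF:
  assumes "VR f p q"
  shows "(0 < p \<longrightarrow> cp (lab f (p-1) q) (lab f p q)) \<and> (0 < q \<longrightarrow> cp (lab f p (q-1)) (lab f p q))"
  using assms
proof (induction "p + q" arbitrary: p q rule: less_induct)
  case less
  show ?case
  proof (cases "p = 0 \<or> q = 0")
    case True
    then show ?thesis using cp_zs by auto
  next
    case False
    then have pq: "0 < p" "0 < q" by auto
    have k1: "cp (lab f (p-1) (q-1)) (lab f (p-1) q)"
      using less.hyps[of "p-1" q] less.prems pq by auto
    have k2: "cp (lab f (p-1) (q-1)) (lab f p (q-1))"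
      using less.hyps[of p "q-1"] less.prems pq by auto
    have l: "lvc f p q" using less.prems pq by auto
    have e: "lab f p q = F (lab f (p-1) (q-1)) (lab f (p-1) q) (lab f p (q-1)) (f p q)"
      using lab_rec pq by blast
    show ?thesis using LF[OF k1 k2] LF2[OF k1 k2] l e unfolding lvc_def by simp
  qed
qed

lemma lab_first_row_at:
  assumes "lab f (i-1) (j-1) ! (d-1) = 0"
  shows "lab f (i-1) j ! 0 = chainf f (i-1) j" "lab f i (j-1) ! 0 = chainf f i (j-1)"
proof -
  show "lab f (i-1) j ! 0 = chainf f (i-1) j"
  proof (rule lab_row1, intro allI impI)
    fix a b assume h: "1 \<le> a" "a \<le> i-1" "1 \<le> b" "b \<le> j"
    have "lab f a (b-1) ! (d-1) \<le> lab f (i-1) (j-1) ! (d-1)"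
      by (rule lab_mono) (use h dpos in auto)
    then show "min (lab f (a-1) b ! (d-1)) (lab f a (b-1) ! (d-1)) = 0" using assms by simp
  qed
  show "lab f i (j-1) ! 0 = chainf f i (j-1)"
  proof (rule lab_row1, intro allI impI)
    fix a b assume h: "1 \<le> a" "a \<le> i" "1 \<le> b" "b \<le> j-1"
    have "lab f (a-1) b ! (d-1) \<le> lab f (i-1) (j-1) ! (d-1)"
      by (rule lab_mono) (use h dpos in auto)
    then show "min (lab f (a-1) b ! (d-1)) (lab f a (b-1) ! (d-1)) = 0" using assms by simp
  qed
qed

lemma rho0_pos:
  assumes "0 < i" "0 < j" "lab f (i-1) (j-1) ! (d-1) = 0"
  shows "lab f i j ! 0 = chainf f i j + min (lab f (i-1) j ! (d-1)) (lab f i (j-1) ! (d-1))"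
proof -
  have e: "lab f i j = F (lab f (i-1) (j-1)) (lab f (i-1) j) (lab f i (j-1)) (f i j)"
    using lab_rec assms by blast
  show ?thesis using lab_first_row_at[OF assms(3)] assms e dpos chainf_rec[of i j f]
    by (simp add: F_nth)
qed

lemma aux3: "r = max u v + (min p q - k) \<Longrightarrow> (k::nat) \<le> p \<Longrightarrow> k \<le> q \<Longrightarrow> u \<le> k + L \<Longrightarrow> v \<le> k + L
   \<Longrightarrow> r \<le> min p q + L"
  by (auto simp: max_def min_def)

lemma AV:
  assumes adm: "f \<in> admissible_fillings d L n m"
  shows "VR f n m"
proof -
  have isf: "is_filling n m f" and np: "\<not> contains_pattern d f"
    and cb: "\<forall>cs. ne_chain f cs \<longrightarrow> chain_length f cs \<le> L"
    using adm unfolding admissible_fillings_def by auto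
  have np2: "\<not> sechain f d (i-1) (j-1)" if "f i j \<noteq> 0" for i j
    using np pattern_iff[OF isf dpos] that by blast
  have ch: "chainf f i j \<le> L" for i j
    using chain_exists[of f i j] cb by auto
  have "lvc f a b" if "a + b = s" "1 \<le> a" "a \<le> n" "1 \<le> b" "b \<le> m" for s a b
    using that
  proof (induction s arbitrary: a b rule: less_induct)
    case (less s)
    have V1: "VR f (a-1) b"
    proof (intro allI impI)
      fix a' b' assume h: "1 \<le> a'" "a' \<le> a-1" "1 \<le> b'" "b' \<le> b"
      then show "lvc f a' b'" using less.IH[of "a'+b'" a' b'] less.prems by auto
    qed
    have V2: "VR f a (b-1)"
    proof (intro allI impI)
      fix a' b' assume h: "1 \<le> a'" "a' \<le> a" "1 \<le> b'" "b' \<le> b-1"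
      then show "lvc f a' b'" using less.IH[of "a'+b'" a' b'] less.prems by auto
    qed
    have k1: "cp (lab f (a-1) (b-1)) (lab f (a-1) b)" using GF[OF V1] less.prems by auto
    have k2: "cp (lab f (a-1) (b-1)) (lab f a (b-1))" using GF[OF V2] less.prems by auto
    have e: "lab f a b = F (lab f (a-1) (b-1)) (lab f (a-1) b) (lab f a (b-1)) (f a b)"
      using lab_rec less.prems by auto
    show ?case
    proof (cases "f a b = 0")
      case False
      have z: "lab f (a-1) (b-1) ! (d-1) = 0" using lab_dzero_iff np2[OF False] by blast
      have "lab f a b ! 0 = chainf f a b + min (lab f (a-1) b ! (d-1)) (lab f a (b-1) ! (d-1))"
        using rho0_pos[OF _ _ z] less.prems by auto
      then show ?thesis using z ch[of a b] unfolding lvc_def lv_def by simp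
    next
      case True
      note A1 = k1[unfolded cp_iff] and A2 = k2[unfolded cp_iff]
      have "lab f a b ! 0 = max (lab f (a-1) b ! 0) (lab f a (b-1) ! 0) +
          (min (lab f (a-1) b ! (d-1)) (lab f a (b-1) ! (d-1)) - lab f (a-1) (b-1) ! (d-1))"
        using e True dpos by (simp add: F_nth)
      moreover have "lab f (a-1) (b-1) ! (d-1) \<le> lab f (a-1) b ! (d-1)"
        "lab f (a-1) (b-1) ! (d-1) \<le> lab f a (b-1) ! (d-1)" using A1 A2 dpos by auto
      moreover have "lab f (a-1) b ! 0 \<le> lab f (a-1) (b-1) ! (d-1) + L"
        "lab f a (b-1) ! 0 \<le> lab f (a-1) (b-1) ! (d-1) + L" using A1 A2 by auto
      ultimately have "lab f a b ! 0 \<le> min (lab f (a-1) b ! (d-1)) (lab f a (b-1) ! (d-1)) + L"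
        using aux3 by metis
      then show ?thesis using True unfolding lvc_def lv_def by simp
    qed
  qed
  then show ?thesis by blast
qed

lemma VA:
  assumes isf: "is_filling n m f" and v: "VR f n m"
  shows "f \<in> admissible_fillings d L n m"
proof -
  have ch: "chainf f i j \<le> L" if "i \<le> n" "j \<le> m" for i j
    using that
  proof (induction "i + j" arbitrary: i j rule: less_induct)
    case less
    show ?case
    proof (cases "i = 0 \<or> j = 0")
      case True then show ?thesis by auto
    next
      case False
      then have ij: "0 < i" "0 < j" by auto
      have l: "lvc f i j" using v less.prems ij by auto
      show ?thesis
      proof (cases "f i j = 0")
        case True
        have "chainf f i j = max (chainf f (i-1) j) (chainf f i (j-1))"
          using chainf_rec[OF ij] True by simp
        moreover have "chainf f (i-1) j \<le> L" "chainf f i (j-1) \<le> L"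
          using less.hyps less.prems ij by auto
        ultimately show ?thesis by simp
      next
        case False
        have z: "lab f (i-1) (j-1) ! (d-1) = 0" using l False unfolding lvc_def lv_def by auto
        have "lab f i j ! 0 = chainf f i j + min (lab f (i-1) j ! (d-1)) (lab f i (j-1) ! (d-1))"
          using rho0_pos[OF ij z] .
        then show ?thesis using l unfolding lvc_def lv_def by simp
      qed
    qed
  qed
  have cb: "\<forall>cs. ne_chain f cs \<longrightarrow> chain_length f cs \<le> L"
    using chain_upper_nm[OF isf] ch[of n m] by (meson order_trans order_refl)
  have np: "\<not> contains_pattern d f"
  proof
    assume "contains_pattern d f"
    then obtain i j where ij: "f i j \<noteq> 0" "sechain f d (i-1) (j-1)"
      using pattern_iff[OF isf dpos] by blast
    then have r: "1 \<le> i" "i \<le> n" "1 \<le> j" "j \<le> m" using isf unfolding is_filling_def by auto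
    then have "lvc f i j" using v by auto
    then have "lab f (i-1) (j-1) ! (d-1) = 0" using ij unfolding lvc_def lv_def by auto
    then show False using lab_dzero_iff ij by blast
  qed
  show ?thesis unfolding admissible_fillings_def using isf cb np by auto
qed

definition T :: "filling \<Rightarrow> nat \<Rightarrow> nat \<Rightarrow> nat" where
  "T f p q = (\<Sum>a=1..p. \<Sum>b=1..q. f a b)"

lemma T_rec:
  assumes "0 < p" "0 < q"
  shows "T f p q + T f (p-1) (q-1) = T f (p-1) q + T f p (q-1) + f p q"
proof -
  obtain p' q' where pq: "p = Suc p'" "q = Suc q'" using assms by (metis Suc_pred)
  have "T f p q = T f p' q + (\<Sum>b=1..Suc q'. f (Suc p') b)" unfolding T_def pq by simp
  moreover have "T f p (q-1) = T f p' q' + (\<Sum>b=1..q'. f (Suc p') b)" unfolding T_def pq by simp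
  moreover have "(\<Sum>b=1..Suc q'. f (Suc p') b) = (\<Sum>b=1..q'. f (Suc p') b) + f (Suc p') (Suc q')" by simp
  ultimately show ?thesis unfolding pq by simp
qed

lemma size_lab:
  assumes "VR f p q"
  shows "sum_list (lab f p q) = T f p q"
  using assms
proof (induction "p + q" arbitrary: p q rule: less_induct)
  case less
  show ?case
  proof (cases "p = 0 \<or> q = 0")
    case True then show ?thesis by (auto simp: T_def zs_def)
  next
    case False
    then have pq: "0 < p" "0 < q" by auto
    have V1: "VR f (p-1) q" "VR f p (q-1)" "VR f (p-1) (q-1)" using less.prems by auto
    have k1: "cp (lab f (p-1) (q-1)) (lab f (p-1) q)" using GF[OF V1(1)] pq by auto
    have k2: "cp (lab f (p-1) (q-1)) (lab f p (q-1))" using GF[OF V1(2)] pq by auto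
    have e: "lab f p q = F (lab f (p-1) (q-1)) (lab f (p-1) q) (lab f p (q-1)) (f p q)"
      using lab_rec pq by blast
    have s: "sum_list (lab f p q) + sum_list (lab f (p-1) (q-1)) =
        sum_list (lab f (p-1) q) + sum_list (lab f p (q-1)) + f p q"
      unfolding e by (rule size_F) (use k1 k2 in \<open>auto simp: cp_iff\<close>)
    have "sum_list (lab f (p-1) q) = T f (p-1) q" using less.hyps[of "p-1" q] V1 pq by auto
    moreover have "sum_list (lab f p (q-1)) = T f p (q-1)" using less.hyps[of p "q-1"] V1 pq by auto
    moreover have "sum_list (lab f (p-1) (q-1)) = T f (p-1) (q-1)" using less.hyps[of "p-1" "q-1"] V1 pq by auto
    ultimately show ?thesis using s T_rec[OF pq, of f] by linarith
  qed
qed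

end



context cz begin

definition Phi :: "nat \<Rightarrow> nat \<Rightarrow> filling \<Rightarrow> nat list list \<times> nat list list" where
  "Phi n m f = (map (\<lambda>i. lab f i m) [0..<Suc n], map (\<lambda>j. lab f n j) [0..<Suc m])"

lemma mu: "i \<le> n \<Longrightarrow> map g [0..<Suc n] ! i = g i"
proof -
  assume "i \<le> n"
  then have "i < Suc n - 0" by simp
  from nth_map_upt[OF this, of g] show ?thesis by simp
qed

lemma wt_map:
  assumes "0 < i" "i \<le> n"
  shows "wt (map g [0..<Suc n]) i = int (sum_list (g i)) - int (sum_list (g (i-1)))"
proof -
  have a: "map g [0..<Suc n] ! i = g i" by (rule mu) (use assms in arith)
  have b: "map g [0..<Suc n] ! (i-1) = g (i-1)" by (rule mu) (use assms in arith)
  show ?thesis unfolding wt_def a b ..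
qed

lemma VR_mono: "VR f p q \<Longrightarrow> p' \<le> p \<Longrightarrow> q' \<le> q \<Longrightarrow> VR f p' q'"
  by auto

lemma T1:
  assumes adm: "f \<in> admissible_fillings d L n m"
  shows "Phi n m f \<in> tableau_pairs d L n m"
proof -
  have V: "VR f n m" using AV[OF adm] .
  have P: "cyl_ssyt d L (map (\<lambda>i. lab f i m) [0..<Suc n])"
    unfolding cyl_ssyt_def
  proof (intro conjI allI impI)
    show "map (\<lambda>i. lab f i m) [0..<Suc n] ! 0 = replicate d 0" by (simp add: zs_def mu del: upt_Suc)
  next
    fix i assume i: "Suc i < length (map (\<lambda>i. lab f i m) [0..<Suc n])"
    then have "VR f (Suc i) m" using VR_mono[OF V, of "Suc i" m] by simp
    then have "cp (lab f i m) (lab f (Suc i) m)" using GF[OF \<open>VR f (Suc i) m\<close>] by simp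
    then show "cp (map (\<lambda>i. lab f i m) [0..<Suc n] ! i) (map (\<lambda>i. lab f i m) [0..<Suc n] ! Suc i)"
      using i by (simp add: mu del: upt_Suc)
  qed simp
  have Q: "cyl_ssyt d L (map (\<lambda>j. lab f n j) [0..<Suc m])"
    unfolding cyl_ssyt_def
  proof (intro conjI allI impI)
    show "map (\<lambda>j. lab f n j) [0..<Suc m] ! 0 = replicate d 0" by (simp add: zs_def mu del: upt_Suc)
  next
    fix j assume j: "Suc j < length (map (\<lambda>j. lab f n j) [0..<Suc m])"
    then have "VR f n (Suc j)" using VR_mono[OF V, of n "Suc j"] by simp
    then have "cp (lab f n j) (lab f n (Suc j))" using GF[OF \<open>VR f n (Suc j)\<close>] by simp
    then show "cp (map (\<lambda>j. lab f n j) [0..<Suc m] ! j) (map (\<lambda>j. lab f n j) [0..<Suc m] ! Suc j)"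
      using j by (simp add: mu del: upt_Suc)
  qed simp
  show ?thesis using P Q unfolding tableau_pairs_def Phi_def shape_def by simp
qed

lemma T_row: "0 < i \<Longrightarrow> T f i m = T f (i-1) m + (\<Sum>b=1..m. f i b)"
  unfolding T_def by (cases i) auto

lemma T_col: "0 < j \<Longrightarrow> T f n j = T f n (j-1) + (\<Sum>a=1..n. f a j)"
  unfolding T_def by (cases j) (auto simp: sum.distrib)

lemma T4:
  assumes adm: "f \<in> admissible_fillings d L n m"
  shows "(\<forall>i \<in> {1..n}. int (\<Sum>j = 1..m. f i j) = wt (fst (Phi n m f)) i) \<and>
         (\<forall>j \<in> {1..m}. int (\<Sum>i = 1..n. f i j) = wt (snd (Phi n m f)) j)"
proof -
  have V: "VR f n m" using AV[OF adm] .
  have A: "int (\<Sum>j = 1..m. f i j) = wt (fst (Phi n m f)) i" if i: "i \<in> {1..n}" for i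
  proof -
    have "wt (fst (Phi n m f)) i = int (sum_list (lab f i m)) - int (sum_list (lab f (i-1) m))"
      unfolding Phi_def fst_conv by (rule wt_map) (use i in auto)
    also have "\<dots> = int (T f i m) - int (T f (i-1) m)"
      using size_lab[OF VR_mono[OF V, of i m]] size_lab[OF VR_mono[OF V, of "i-1" m]] i by auto
    also have "\<dots> = int (\<Sum>j = 1..m. f i j)" using T_row[of i f m] i by auto
    finally show ?thesis by simp
  qed
  have B: "int (\<Sum>i = 1..n. f i j) = wt (snd (Phi n m f)) j" if j: "j \<in> {1..m}" for j
  proof -
    have "wt (snd (Phi n m f)) j = int (sum_list (lab f n j)) - int (sum_list (lab f n (j-1)))"
      unfolding Phi_def snd_conv by (rule wt_map) (use j in auto)
    also have "\<dots> = int (T f n j) - int (T f n (j-1))"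
      using size_lab[OF VR_mono[OF V, of n j]] size_lab[OF VR_mono[OF V, of n "j-1"]] j by auto
    also have "\<dots> = int (\<Sum>i = 1..n. f i j)" using T_col[of j f n] j by auto
    finally show ?thesis by simp
  qed
  show ?thesis using A B by blast
qed

lemma T5: "Phi m n (reflect f) = prod.swap (Phi n m f)"
  unfolding Phi_def by (simp add: lab_reflect del: upt_Suc)

lemma T2: "inj_on (Phi n m) (admissible_fillings d L n m)"
proof (rule inj_onI)
  fix f f' assume f: "f \<in> admissible_fillings d L n m" and f': "f' \<in> admissible_fillings d L n m"
    and eq: "Phi n m f = Phi n m f'"
  have V: "VR f n m" "VR f' n m" using AV f f' by auto
  have bd1: "lab f i m = lab f' i m" if "i \<le> n" for i
  proof -
    have "\<forall>x\<in>{0..<Suc n}. lab f x m = lab f' x m"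
      using eq unfolding Phi_def by (simp del: upt_Suc)
    then show ?thesis using that by auto
  qed
  have bd2: "lab f n j = lab f' n j" if "j \<le> m" for j
  proof -
    have "\<forall>x\<in>{0..<Suc m}. lab f n x = lab f' n x"
      using eq unfolding Phi_def by (simp del: upt_Suc)
    then show ?thesis using that by auto
  qed
  have loc: "Gk (lab g (i-1) j) (lab g i (j-1)) (lab g i j) = lab g (i-1) (j-1) \<and>
       Gx (lab g (i-1) j) (lab g i (j-1)) (lab g i j) = g i j"
    if "VR g n m" "0 < i" "i \<le> n" "0 < j" "j \<le> m" for g i j
  proof -
    have k1: "cp (lab g (i-1) (j-1)) (lab g (i-1) j)" using GF[OF VR_mono[OF that(1), of "i-1" j]] that by auto
    have k2: "cp (lab g (i-1) (j-1)) (lab g i (j-1))" using GF[OF VR_mono[OF that(1), of i "j-1"]] that by auto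
    have l: "lvc g i j" using that by auto
    have e: "lab g i j = F (lab g (i-1) (j-1)) (lab g (i-1) j) (lab g i (j-1)) (g i j)"
      using lab_rec that by blast
    show ?thesis using LFB[OF k1 k2] l e unfolding lvc_def by simp
  qed
  have labeq: "lab f i j = lab f' i j" if "i \<le> n" "j \<le> m" for i j
    using that
  proof (induction "(n - i) + (m - j)" arbitrary: i j rule: less_induct)
    case less
    show ?case
    proof (cases "i = n \<or> j = m")
      case True then show ?thesis using bd1 bd2 less.prems by auto
    next
      case False
      then have ij: "i < n" "j < m" using less.prems by auto
      have "lab f (Suc i) j = lab f' (Suc i) j" using less.hyps[of "Suc i" j] ij by (simp del: lab.simps)
      moreover have "lab f i (Suc j) = lab f' i (Suc j)" using less.hyps[of i "Suc j"] ij by (simp del: lab.simps)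
      moreover have "lab f (Suc i) (Suc j) = lab f' (Suc i) (Suc j)"
        using less.hyps[of "Suc i" "Suc j"] ij by (simp del: lab.simps)
      ultimately show ?thesis using loc[OF V(1), of "Suc i" "Suc j"] loc[OF V(2), of "Suc i" "Suc j"] ij
        by (simp del: lab.simps)
    qed
  qed
  show "f = f'"
  proof (intro ext)
    fix i j
    show "f i j = f' i j"
    proof (cases "1 \<le> i \<and> i \<le> n \<and> 1 \<le> j \<and> j \<le> m")
      case True
      then have "lab f (i-1) j = lab f' (i-1) j" "lab f i (j-1) = lab f' i (j-1)" "lab f i j = lab f' i j"
        using labeq by auto
      then show ?thesis using loc[OF V(1), of i j] loc[OF V(2), of i j] True by auto
    next
      case False
      have "is_filling n m f" "is_filling n m f'" using f f' unfolding admissible_fillings_def by auto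
      then have "f i j = 0" "f' i j = 0" using False unfolding is_filling_def by blast+
      then show ?thesis by simp
    qed
  qed
qed

end



context cz begin

fun bl :: "nat list list \<Rightarrow> nat list list \<Rightarrow> nat \<Rightarrow> nat \<Rightarrow> nat \<Rightarrow> nat \<Rightarrow> nat list" where
  "bl P Q n m 0 b = Q ! (m - b)"
| "bl P Q n m (Suc a) 0 = P ! (n - Suc a)"
| "bl P Q n m (Suc a) (Suc b) = Gk (bl P Q n m (Suc a) b) (bl P Q n m a (Suc b)) (bl P Q n m a b)"

lemma cp_zs_eq: "cp a zs \<Longrightarrow> a = zs"
  unfolding cp_iff by (intro nth_equalityI) auto

lemma T3:
  assumes pq: "(P, Q) \<in> tableau_pairs d L n m"
  shows "\<exists>g \<in> admissible_fillings d L n m. Phi n m g = (P, Q)"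
proof -
  have sP: "cyl_ssyt d L P" and lP: "length P = Suc n" and sQ: "cyl_ssyt d L Q" and lQ: "length Q = Suc m"
    and sh: "last P = last Q" using pq unfolding tableau_pairs_def shape_def by auto
  have "P \<noteq> []" "Q \<noteq> []" using lP lQ by auto
  then have "last P = P ! n" "last Q = Q ! m" using last_conv_nth[of P] last_conv_nth[of Q] lP lQ by auto
  then have Pn: "P ! n = Q ! m" using sh by simp
  define B where "B i j = bl P Q n m (n - i) (m - j)" for i j
  have Brec: "B (i-1) (j-1) = Gk (B (i-1) j) (B i (j-1)) (B i j)"
    if "0 < i" "i \<le> n" "0 < j" "j \<le> m" for i j
  proof -
    have e1: "n - (i-1) = Suc (n - i)" and e2: "m - (j-1) = Suc (m - j)" using that by auto
    show ?thesis unfolding B_def e1 e2 by (rule bl.simps(3))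
  qed
  have Btop: "B n j = Q ! j" if "j \<le> m" for j using that unfolding B_def by simp
  have Bright: "B i m = P ! i" if "i \<le> n" for i
  proof (cases "i = n")
    case True then show ?thesis using Pn unfolding B_def by simp
  next
    case False
    then have "n - i = Suc (n - Suc i)" using that by auto
    then show ?thesis unfolding B_def using that by (simp del: bl.simps add: bl.simps(2))
  qed
  have cpP: "cp (P ! i) (P ! Suc i)" if "i < n" for i using sP lP that unfolding cyl_ssyt_def by auto
  have cpQ: "cp (Q ! j) (Q ! Suc j)" if "j < m" for j using sQ lQ that unfolding cyl_ssyt_def by auto
  have E: "(0 < i \<longrightarrow> cp (B (i-1) j) (B i j)) \<and> (0 < j \<longrightarrow> cp (B i (j-1)) (B i j))"
    if "i \<le> n" "j \<le> m" for i j
    using that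
  proof (induction "(n - i) + (m - j)" arbitrary: i j rule: less_induct)
    case less
    have c1: "cp (B (i-1) j) (B i j)" if "0 < i"
    proof (cases "j = m")
      case True
      then show ?thesis using Bright[of "i-1"] Bright[of i] cpP[of "i-1"] less.prems that by auto
    next
      case False
      then have jm: "j < m" using less.prems by auto
      have IH: "cp (B (i-1) (Suc j)) (B i (Suc j)) \<and> cp (B i j) (B i (Suc j))"
        using less.hyps[of i "Suc j"] less.prems jm that by auto
      have "B (i-1) j = Gk (B (i-1) (Suc j)) (B i j) (B i (Suc j))"
        using Brec[of i "Suc j"] less.prems jm that by auto
      then show ?thesis using LB[of "B (i-1) (Suc j)" "B i (Suc j)" "B i j"] IH by simp
    qed
    have c2: "cp (B i (j-1)) (B i j)" if "0 < j"
    proof (cases "i = n")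
      case True
      then show ?thesis using Btop[of "j-1"] Btop[of j] cpQ[of "j-1"] less.prems that by auto
    next
      case False
      then have im: "i < n" using less.prems by auto
      have IH: "cp (B i j) (B (Suc i) j) \<and> cp (B (Suc i) (j-1)) (B (Suc i) j)"
        using less.hyps[of "Suc i" j] less.prems im that by auto
      have "B i (j-1) = Gk (B i j) (B (Suc i) (j-1)) (B (Suc i) j)"
        using Brec[of "Suc i" j] less.prems im that by auto
      then show ?thesis using LB[of "B i j" "B (Suc i) j" "B (Suc i) (j-1)"] IH by simp
    qed
    show ?case using c1 c2 by blast
  qed
  have P0: "P ! 0 = zs" and Q0: "Q ! 0 = zs" using sP sQ unfolding cyl_ssyt_def zs_def by auto
  have B0j: "B 0 j = zs" if "j \<le> m" for j
    using that
  proof (induction "m - j" arbitrary: j)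
    case 0
    then have "j = m" by auto
    then show ?case using Bright[of 0] P0 by simp
  next
    case (Suc k)
    then have "B 0 (Suc j) = zs" by auto
    moreover have "cp (B 0 j) (B 0 (Suc j))" using E[of 0 "Suc j"] Suc by auto
    ultimately show ?case using cp_zs_eq by simp
  qed
  have Bi0: "B i 0 = zs" if "i \<le> n" for i
    using that
  proof (induction "n - i" arbitrary: i)
    case 0
    then have "i = n" by auto
    then show ?case using Btop[of 0] Q0 by simp
  next
    case (Suc k)
    then have "B (Suc i) 0 = zs" by auto
    moreover have "cp (B i 0) (B (Suc i) 0)" using E[of "Suc i" 0] Suc by auto
    ultimately show ?case using cp_zs_eq by simp
  qed
  define g where "g i j = (if 1 \<le> i \<and> i \<le> n \<and> 1 \<le> j \<and> j \<le> m then Gx (B (i-1) j) (B i (j-1)) (B i j) else 0)"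
    for i j
  have loc: "cp (B (i-1) (j-1)) (B (i-1) j) \<and> cp (B (i-1) (j-1)) (B i (j-1)) \<and>
      lv (B (i-1) (j-1)) (B (i-1) j) (B i (j-1)) (g i j) (B i j) \<and>
      F (B (i-1) (j-1)) (B (i-1) j) (B i (j-1)) (g i j) = B i j"
    if "0 < i" "i \<le> n" "0 < j" "j \<le> m" for i j
  proof -
    have "cp (B (i-1) j) (B i j)" "cp (B i (j-1)) (B i j)" using E[of i j] that by auto
    from LB[OF this] show ?thesis using Brec[OF that] that unfolding g_def by simp
  qed
  have labg: "lab g i j = B i j" if "i \<le> n" "j \<le> m" for i j
    using that
  proof (induction "i + j" arbitrary: i j rule: less_induct)
    case less
    show ?case
    proof (cases "i = 0 \<or> j = 0")
      case True then show ?thesis using B0j Bi0 less.prems by auto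
    next
      case False
      then have ij: "0 < i" "0 < j" by auto
      have "lab g i j = F (lab g (i-1) (j-1)) (lab g (i-1) j) (lab g i (j-1)) (g i j)"
        using lab_rec ij by blast
      also have "\<dots> = F (B (i-1) (j-1)) (B (i-1) j) (B i (j-1)) (g i j)"
        using less.hyps[of "i-1" "j-1"] less.hyps[of "i-1" j] less.hyps[of i "j-1"] less.prems ij by simp
      also have "\<dots> = B i j" using loc ij less.prems by blast
      finally show ?thesis .
    qed
  qed
  have VRg: "VR g n m"
  proof (intro allI impI)
    fix a b assume h: "1 \<le> a" "a \<le> n" "1 \<le> b" "b \<le> m"
    then show "lvc g a b" unfolding lvc_def using labg[of a b] labg[of "a-1" b] labg[of a "b-1"]
        labg[of "a-1" "b-1"] loc[of a b] by simp
  qed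
  have isf: "is_filling n m g" unfolding is_filling_def g_def by auto
  have adm: "g \<in> admissible_fillings d L n m" using VA[OF isf VRg] .
  have "map (\<lambda>i. lab g i m) [0..<Suc n] = P"
    by (rule nth_equalityI) (use lP labg Bright in \<open>auto simp: mu simp del: upt_Suc\<close>)
  moreover have "map (\<lambda>j. lab g n j) [0..<Suc m] = Q"
    by (rule nth_equalityI) (use lQ labg Btop in \<open>auto simp: mu simp del: upt_Suc\<close>)
  ultimately have "Phi n m g = (P, Q)" unfolding Phi_def by simp
  then show ?thesis using adm by blast
qed

lemma main_nm:
  "bij_betw (Phi n m) (admissible_fillings d L n m) (tableau_pairs d L n m) \<and>
      (\<forall>f \<in> admissible_fillings d L n m.
         (\<forall>i \<in> {1..n}. int (\<Sum>j = 1..m. f i j) = wt (fst (Phi n m f)) i) \<and>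
         (\<forall>j \<in> {1..m}. int (\<Sum>i = 1..n. f i j) = wt (snd (Phi n m f)) j) \<and>
         Phi m n (reflect f) = prod.swap (Phi n m f))"
proof -
  have "Phi n m ` admissible_fillings d L n m = tableau_pairs d L n m"
  proof
    show "Phi n m ` admissible_fillings d L n m \<subseteq> tableau_pairs d L n m" using T1 by blast
    show "tableau_pairs d L n m \<subseteq> Phi n m ` admissible_fillings d L n m"
    proof
      fix x assume "x \<in> tableau_pairs d L n m"
      then obtain P Q where "x = (P, Q)" "(P, Q) \<in> tableau_pairs d L n m" by (cases x) auto
      then show "x \<in> Phi n m ` admissible_fillings d L n m" using T3 by force
    qed
  qed
  then have "bij_betw (Phi n m) (admissible_fillings d L n m) (tableau_pairs d L n m)"
    unfolding bij_betw_def using T2 by blast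
  then show ?thesis using T4 T5 by blast
qed

end

theorem corollary4p2:
  fixes d L :: nat
  assumes "0 < d" and "0 < L"
  shows "\<exists>\<Phi> :: nat \<Rightarrow> nat \<Rightarrow> filling \<Rightarrow> nat list list \<times> nat list list.
    \<forall>n m. bij_betw (\<Phi> n m) (admissible_fillings d L n m) (tableau_pairs d L n m) \<and>
      (\<forall>f \<in> admissible_fillings d L n m.
         (\<forall>i \<in> {1..n}. int (\<Sum>j = 1..m. f i j) = wt (fst (\<Phi> n m f)) i) \<and>
         (\<forall>j \<in> {1..m}. int (\<Sum>i = 1..n. f i j) = wt (snd (\<Phi> n m f)) j) \<and>
         \<Phi> m n (reflect f) = prod.swap (\<Phi> n m f))"
proof -
  interpret cz d L by unfold_locales (rule assms(1))
  show ?thesis using main_nm by blast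
qed



end
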